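(* Let $p=2$, $M=\mathbb{F}_2[x_1,\dots,x_N]/(x_1^2-x_1,\dots,x_N^2-x_N)$, and $1\le k\le N$. Let $\{f_I\}$ be a family of elements of $M$ indexed by the $k$-subsets $I$ of $[N]$, such that for every such $I$, $\deg\big(f_I-\prod_{i\in I}x_i\big)\le k-1$. Let $J$ be the ideal of $M$ generated by the $f_I$. Then $$\dim_{\mathbb{F}_2}(M/J)\le\sum_{j=0}^{k-1}\binom{N}{j}.$$
   Context: The degree of an element of $M$ is the degree of its unique multilinear representative. *)

theory Defs
  imports Complex_Main "HOL-Library.Z2" "HOL-Library.Function_Algebras"
begin

text \<open>Elements of M = F_2[x_1..x_N]/(x_i^2 - x_i) are represented by their unique
multilinear representative: a coefficient function on monomials, a monomial being the
set of variable indices occurring in it (a subset of {1..N}).\<close>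

type_synonym mlpoly = "nat set \<Rightarrow> bit"

definition Mspace :: "nat \<Rightarrow> mlpoly set" where
  "Mspace N = {f. \<forall>S. f S \<noteq> 0 \<longrightarrow> S \<subseteq> {1..N}}"

definition mmono :: "nat set \<Rightarrow> mlpoly" where
  "mmono I = (\<lambda>S. if S = I then 1 else 0)"

text \<open>Multiplication in M: x_A * x_B = x_(A union B) since x_i^2 = x_i.\<close>
definition mmult :: "mlpoly \<Rightarrow> mlpoly \<Rightarrow> mlpoly" where
  "mmult f g = (\<lambda>S. \<Sum>A\<in>Pow S. \<Sum>B\<in>Pow S. if A \<union> B = S then f A * g B else 0)"

definition mdeg :: "mlpoly \<Rightarrow> nat" where
  "mdeg f = (if f = 0 then 0 else Max (card ` {S. f S \<noteq> 0}))"

definition gen_ideal :: "nat \<Rightarrow> 'i set \<Rightarrow> ('i \<Rightarrow> mlpoly) \<Rightarrow> mlpoly set" where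
  "gen_ideal N Ix f = {(\<Sum>I\<in>Ix. mmult (g I) (f I)) | g. \<forall>I\<in>Ix. g I \<in> Mspace N}"

definition mscale :: "bit \<Rightarrow> mlpoly \<Rightarrow> mlpoly" where
  "mscale c f = (\<lambda>S. c * f S)"

text \<open>dim_{F_2}(M/J) = dim M - dim J (both finite-dimensional).\<close>
definition quot_dim :: "mlpoly set \<Rightarrow> mlpoly set \<Rightarrow> nat" where
  "quot_dim V W = vector_space.dim mscale V - vector_space.dim mscale W"

end

theory Submission
  imports Defs
begin

interpretation V: vector_space mscale
  by unfold_locales (auto simp: mscale_def fun_eq_iff algebra_simps)

lemma sum_apply_fun: "(sum g A) x = (\<Sum>i\<in>A. g i x)" for g :: "'i \<Rightarrow> 'a \<Rightarrow> 'b::comm_monoid_add"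
  by (induction A rule: infinite_finite_induct) auto

lemma mmult_zero_left: "mmult 0 g = 0"
  unfolding mmult_def zero_fun_def by (rule ext) (simp only: mult_zero_left if_cancel sum.neutral_const)

lemma if_distrib_aux: "(if P then x*(y+z) else 0) = (if P then x*y else 0) + (if P then x*z else (0::'a::semiring_0))"
  by (simp add: distrib_left)

lemma dd_aux:
  assumes "finite X" "finite Y"
  shows "(\<Sum>a\<in>X. \<Sum>b\<in>Y. if a = x then (if b = y then c else 0) else 0) = (if x\<in>X \<and> y\<in>Y then c else (0::'a::comm_monoid_add))"
proof -
  have "(\<Sum>a\<in>X. \<Sum>b\<in>Y. if a = x then (if b = y then c else 0) else 0) = (\<Sum>a\<in>X. if a = x then (if y \<in> Y then c else 0) else 0)"
    by (intro sum.cong refl) (simp add: assms sum.delta)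
  also have "\<dots> = (if x\<in>X \<and> y\<in>Y then c else 0)" by (simp add: assms sum.delta)
  finally show ?thesis .
qed

lemma mono_aux: "(if A' \<union> B' = S then (if A'=A then 1 else 0) * (if B'=B then 1 else 0) else (0::'a::semiring_1)) = (if A'=A then (if B'=B then (if A\<union>B=S then 1 else 0) else 0) else 0)"
  by auto

lemma mmult_add_right: "mmult a (b + c) = mmult a b + mmult a c"
proof (rule ext)
  fix S
  have "mmult a (b + c) S = (\<Sum>A\<in>Pow S. \<Sum>B\<in>Pow S. (if A \<union> B = S then a A * b B else 0) + (if A \<union> B = S then a A * c B else 0))"
    unfolding mmult_def plus_fun_def by (intro sum.cong refl) (simp only: if_distrib_aux)
  also have "\<dots> = mmult a b S + mmult a c S" unfolding mmult_def by (simp only: sum.distrib)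
  finally show "mmult a (b + c) S = (mmult a b + mmult a c) S" by (simp only: plus_fun_def)
qed

lemma mmono_mult: assumes "finite A" "finite B" shows "mmult (mmono A) (mmono B) = mmono (A \<union> B)"
proof (rule ext)
  fix S
  show "mmult (mmono A) (mmono B) S = mmono (A \<union> B) S"
  proof (cases "finite S")
    case False
    then show ?thesis using assms by (auto simp: mmult_def mmono_def)
  next
    case True
  have "mmult (mmono A) (mmono B) S =
    (\<Sum>A'\<in>Pow S. \<Sum>B'\<in>Pow S. if A' = A then (if B' = B then (if A \<union> B = S then 1 else 0) else 0) else 0)"
    unfolding mmult_def mmono_def
    by (simp only: mono_aux)
  also have "\<dots> = mmono (A \<union> B) S"
    using True by (simp only: dd_aux finite_Pow_iff) (auto simp: mmono_def)
  finally show ?thesis .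
  qed
qed

lemma mmult_support:
  assumes "\<And>B. r B \<noteq> 0 \<Longrightarrow> card B \<le> m" and "mmult (mmono A) r T \<noteq> 0"
  shows "card T \<le> card A + m"
proof -
  from assms(2) obtain A' where A': "A' \<in> Pow T"
    "(\<Sum>B\<in>Pow T. if A' \<union> B = T then mmono A A' * r B else 0) \<noteq> 0"
    unfolding mmult_def using sum.not_neutral_contains_not_neutral by blast
  then obtain B where "B \<in> Pow T" "(if A' \<union> B = T then mmono A A' * r B else 0) \<noteq> 0"
    using sum.not_neutral_contains_not_neutral by blast
  then have "A' \<union> B = T" "A' = A" "r B \<noteq> 0"
    by (auto simp: mmono_def split: if_splits)
  then show ?thesis using assms(1) card_Un_le[of A B] by fastforce
qed

lemma delta_aux: "finite P \<Longrightarrow> (\<Sum>S\<in>P. (g S::'a::semiring_1) * (if T = S then 1 else 0)) = (if T\<in>P then g T else 0)"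
  by (simp add: sum.delta' if_distrib[of "(*) _"] cong: if_cong)

lemma Mspan: "Mspace N \<subseteq> V.span (mmono ` Pow {1..N})"
  proof
    fix g assume g: "g \<in> Mspace N"
    have "g = (\<Sum>S\<in>Pow {1..N}. mscale (g S) (mmono S))"
    proof (rule ext)
      fix T
      have "(\<Sum>S\<in>Pow {1..N}. mscale (g S) (mmono S)) T = (\<Sum>S\<in>Pow {1..N}. g S * (if T = S then 1 else 0))"
        by (simp only: sum_apply_fun mscale_def mmono_def)
      also have "\<dots> = (if T \<in> Pow {1..N} then g T else 0)" by (rule delta_aux) simp
      also have "\<dots> = g T"
      proof (cases "T \<in> Pow {1..N}")
        case False
        then have "g T = 0" using g unfolding Mspace_def by blast
        then show ?thesis using False by simp
      qed simp
      finally show "g T = (\<Sum>S\<in>Pow {1..N}. mscale (g S) (mmono S)) T" by simp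
    qed
    also have "\<dots> \<in> V.span (mmono ` Pow {1..N})"
      by (intro V.span_sum V.span_scale V.span_base) auto
    finally show "g \<in> V.span (mmono ` Pow {1..N})" .
  qed

lemma dimM: "V.dim (Mspace N) \<le> 2 ^ N"
proof -
  have "V.dim (Mspace N) \<le> card (mmono ` Pow {1..N})"
    by (intro V.dim_le_card Mspan) auto
  also have "\<dots> \<le> card (Pow {1..N})" by (rule card_image_le) simp
  also have "\<dots> = 2 ^ N" by (simp add: card_Pow)
  finally show ?thesis .
qed

lemma mmult_Mspace: assumes "a \<in> Mspace N" "b \<in> Mspace N" shows "mmult a b \<in> Mspace N"
  unfolding Mspace_def
proof (intro CollectI allI impI)
  fix S assume "mmult a b S \<noteq> 0"
  then obtain A' where A': "A' \<in> Pow S"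
    "(\<Sum>B\<in>Pow S. if A' \<union> B = S then a A' * b B else 0) \<noteq> 0"
    unfolding mmult_def using sum.not_neutral_contains_not_neutral by blast
  then obtain B where "B \<in> Pow S" "(if A' \<union> B = S then a A' * b B else 0) \<noteq> 0"
    using sum.not_neutral_contains_not_neutral by blast
  then have "A' \<union> B = S" "a A' \<noteq> 0" "b B \<noteq> 0"
    by (auto split: if_splits)
  moreover have "A' \<subseteq> {1..N}" "B \<subseteq> {1..N}" using assms \<open>a A' \<noteq> 0\<close> \<open>b B \<noteq> 0\<close> unfolding Mspace_def by blast+
  ultimately show "S \<subseteq> {1..N}" by blast
qed

lemma sum_Mspace: "(\<And>i. i \<in> X \<Longrightarrow> F i \<in> Mspace N) \<Longrightarrow> sum F X \<in> Mspace N"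
  unfolding Mspace_def
proof (intro CollectI allI impI)
  fix S assume F: "\<And>i. i \<in> X \<Longrightarrow> F i \<in> {f. \<forall>S. f S \<noteq> 0 \<longrightarrow> S \<subseteq> {1..N}}" and "sum F X S \<noteq> 0"
  then have "(\<Sum>i\<in>X. F i S) \<noteq> 0" by (metis sum_apply_fun)
  then obtain i where "i \<in> X" "F i S \<noteq> 0" using sum.not_neutral_contains_not_neutral by blast
  then show "S \<subseteq> {1..N}" using F by blast
qed

lemma count_small:
  assumes "1 \<le> k"
  shows "card {S. S \<subseteq> {1..N} \<and> k \<le> card S} + (\<Sum>j = 0..k - 1. N choose j) = 2 ^ N"
proof -
  define Small where "Small = {S. S \<subseteq> {1..N} \<and> card S < k}"
  have "Small = (\<Union>j\<in>{..<k}. {S. S \<subseteq> {1..N} \<and> card S = j})" unfolding Small_def by auto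
  then have "card Small = (\<Sum>j\<in>{..<k}. card {S. S \<subseteq> {1..N} \<and> card S = j})"
    by (simp only:) (rule card_UN_disjoint, auto)
  also have "\<dots> = (\<Sum>j\<in>{..<k}. N choose j)" by (simp add: n_subsets)
  also have "{..<k} = {0..k-1}" using assms by auto
  finally have cs: "card Small = (\<Sum>j = 0..k - 1. N choose j)" .
  have "Pow {1..N} = {S. S \<subseteq> {1..N} \<and> k \<le> card S} \<union> Small" unfolding Small_def by auto
  then have "card (Pow {1..N}) = card {S. S \<subseteq> {1..N} \<and> k \<le> card S} + card Small"
    by (simp only:) (rule card_Un_disjoint, auto simp: Small_def)
  then show ?thesis using cs by (simp add: card_Pow)
qed

theorem lemma2p11:
  fixes N k :: nat and f :: "nat set \<Rightarrow> mlpoly"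
  assumes "1 \<le> k" and "k \<le> N"
    and "\<And>I. I \<subseteq> {1..N} \<Longrightarrow> card I = k \<Longrightarrow> f I \<in> Mspace N"
    and "\<And>I. I \<subseteq> {1..N} \<Longrightarrow> card I = k \<Longrightarrow> mdeg (f I - mmono I) \<le> k - 1"
  shows "quot_dim (Mspace N) (gen_ideal N {I. I \<subseteq> {1..N} \<and> card I = k} f)
           \<le> (\<Sum>j = 0..k - 1. N choose j)"
proof -
  define Sets where "Sets = {S. S \<subseteq> {1..N} \<and> k \<le> card S}"
  define Isel where "Isel (S::nat set) = (SOME I. I \<subseteq> S \<and> card I = k)" for S
  define h where "h S = mmult (mmono (S - Isel S)) (f (Isel S))" for S
  have finSets: "finite Sets" unfolding Sets_def by (rule finite_subset[of _ "Pow {1..N}"]) auto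
  have finS: "finite S" if "S \<in> Sets" for S
    using that unfolding Sets_def by (auto intro: finite_subset)
  have Isel: "Isel S \<subseteq> S \<and> card (Isel S) = k" if "S \<in> Sets" for S
  proof -
    from that have "k \<le> card S" by (simp add: Sets_def)
    then obtain I where "I \<subseteq> S" "card I = k" by (meson obtain_subset_with_card_n)
    then show ?thesis unfolding Isel_def by (intro someI[of "\<lambda>I. I \<subseteq> S \<and> card I = k"]) auto
  qed
  have hprop: "h S S = 1 \<and> (\<forall>T. h S T \<noteq> 0 \<longrightarrow> T = S \<or> card T < card S)" if S: "S \<in> Sets" for S
  proof -
    define I where "I = Isel S"
    define r where "r = f I - mmono I"
    define q where "q = mmult (mmono (S - I)) r"
    have IS: "I \<subseteq> S" "card I = k" using Isel[OF S] by (auto simp: I_def)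
    have SN: "S \<subseteq> {1..N}" "k \<le> card S" using S by (auto simp: Sets_def)
    have IN: "I \<subseteq> {1..N}" using IS SN by auto
    have finI: "finite I" using IN finite_subset by blast
    have rbound: "card B \<le> k - 1" if rB: "r B \<noteq> 0" for B
    proof -
      have sub: "{B. r B \<noteq> 0} \<subseteq> Pow {1..N}"
      proof
        fix B assume "B \<in> {B. r B \<noteq> 0}"
        then have "f I B \<noteq> 0 \<or> mmono I B \<noteq> 0" by (auto simp: r_def)
        then show "B \<in> Pow {1..N}"
          using assms(3)[OF IN IS(2)] IN unfolding Mspace_def mmono_def by (auto split: if_splits)
      qed
      have "r \<noteq> 0" using rB by auto
      then have "mdeg r = Max (card ` {B. r B \<noteq> 0})" by (simp add: mdeg_def)
      moreover have "card B \<le> Max (card ` {B. r B \<noteq> 0})"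
        using rB sub by (intro Max_ge finite_imageI) (auto intro: finite_subset)
      ultimately show ?thesis using assms(4)[OF IN IS(2)] by (simp add: r_def)
    qed
    have hS: "h S = mmono S + q"
    proof -
      have "f I = mmono I + r" by (simp add: r_def)
      then have "h S = mmult (mmono (S - I)) (mmono I) + q"
        by (simp add: h_def I_def[symmetric] q_def mmult_add_right)
      also have "mmult (mmono (S - I)) (mmono I) = mmono S"
        using IS finS[OF S] finI by (simp add: mmono_mult Un_absorb2 Diff_partition)
      finally show ?thesis .
    qed
    have qb: "card T < card S" if "q T \<noteq> 0" for T
    proof -
      have "card T \<le> card (S - I) + (k - 1)"
        using mmult_support[of r "k - 1" "S - I" T] rbound that by (auto simp: q_def)
      also have "card (S - I) = card S - k" using IS finI by (simp add: card_Diff_subset)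
      finally show ?thesis using SN assms(1) by linarith
    qed
    have "q S = 0" using qb by blast
    then have "h S S = 1" by (simp add: hS mmono_def)
    moreover have "T = S \<or> card T < card S" if "h S T \<noteq> 0" for T
    proof (cases "T = S")
      case False
      then have "q T \<noteq> 0" using that by (simp add: hS mmono_def)
      then show ?thesis using qb by blast
    qed simp
    ultimately show ?thesis by blast
  qed
  have inj: "inj_on h Sets"
  proof (rule inj_onI)
    fix S S' assume S: "S \<in> Sets" and S': "S' \<in> Sets" and eq: "h S = h S'"
    have "h S' S \<noteq> 0" using hprop[OF S] eq by simp
    then have 1: "S = S' \<or> card S < card S'" using hprop[OF S'] by blast
    have "h S S' \<noteq> 0" using hprop[OF S'] eq by simp
    then have "S' = S \<or> card S' < card S" using hprop[OF S] by blast
    with 1 show "S = S'" by (metis less_not_sym)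
  qed
  have indep: "V.independent (h ` Sets)"
  proof
    assume dep: "V.dependent (h ` Sets)"
    from dep[unfolded V.dependent_finite[OF finite_imageI[OF finSets]]] obtain u where u: "\<exists>v\<in>h ` Sets. u v \<noteq> 0" "(\<Sum>v\<in>h ` Sets. mscale (u v) v) = 0"
      by blast
    have sum0: "(\<Sum>S\<in>Sets. mscale (u (h S)) (h S)) = 0"
      using u(2) by (simp add: sum.reindex[OF inj])
    define C where "C = {S\<in>Sets. u (h S) \<noteq> 0}"
    have Cne: "C \<noteq> {}" using u(1) by (auto simp: C_def)
    have finC: "finite C" using finSets by (simp add: C_def)
    obtain S0 where S0: "S0 \<in> C" "card S0 = Max (card ` C)"
    proof -
      have "Max (card ` C) \<in> card ` C" using finC Cne by (intro Max_in) auto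
      then show ?thesis using that by (metis imageE)
    qed
    have S0max: "card S \<le> card S0" if "S \<in> C" for S
      using S0(2) finC that by simp
    have S0S: "S0 \<in> Sets" "u (h S0) \<noteq> 0" using S0(1) by (auto simp: C_def)
    have "(\<Sum>S\<in>Sets. mscale (u (h S)) (h S)) S0 = (\<Sum>S\<in>Sets. u (h S) * h S S0)"
      by (simp only: sum_apply_fun mscale_def)
    also have "\<dots> = u (h S0) * h S0 S0 + (\<Sum>S\<in>Sets - {S0}. u (h S) * h S S0)"
      by (rule sum.remove[OF finSets S0S(1)])
    also have "(\<Sum>S\<in>Sets - {S0}. u (h S) * h S S0) = 0"
    proof (rule sum.neutral, rule ballI)
      fix S assume S: "S \<in> Sets - {S0}"
      show "u (h S) * h S S0 = 0"
      proof (rule ccontr)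
        assume "u (h S) * h S S0 \<noteq> 0"
        then have "u (h S) \<noteq> 0" "h S S0 \<noteq> 0" by auto
        then have "S \<in> C" "S0 = S \<or> card S0 < card S" using S hprop[of S] by (auto simp: C_def)
        then show False using S0max S by fastforce
      qed
    qed
    finally have "(\<Sum>S\<in>Sets. mscale (u (h S)) (h S)) S0 = u (h S0)"
      using hprop[OF S0S(1)] by simp
    then show False using sum0 S0S(2) by simp
  qed
  have hJ: "h ` Sets \<subseteq> gen_ideal N {I. I \<subseteq> {1..N} \<and> card I = k} f"
  proof
    fix v assume "v \<in> h ` Sets"
    then obtain S where S: "S \<in> Sets" and v: "v = h S" by auto
    define I where "I = Isel S"
    have IS: "I \<subseteq> S" "card I = k" using Isel[OF S] by (auto simp: I_def)
    have SN: "S \<subseteq> {1..N}" using S by (auto simp: Sets_def)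
    define g where "g I' = (if I' = I then mmono (S - I) else 0)" for I'
    have gM: "\<forall>I'\<in>{I. I \<subseteq> {1..N} \<and> card I = k}. g I' \<in> Mspace N"
      using SN by (auto simp: g_def Mspace_def mmono_def)
    have "(\<Sum>I'\<in>{I. I \<subseteq> {1..N} \<and> card I = k}. mmult (g I') (f I'))
        = (\<Sum>I'\<in>{I. I \<subseteq> {1..N} \<and> card I = k}. if I' = I then h S else 0)"
      by (intro sum.cong refl) (simp add: g_def h_def I_def mmult_zero_left)
    also have "\<dots> = h S"
    proof -
      have "I \<in> {I. I \<subseteq> {1..N} \<and> card I = k}" using IS SN by auto
      then show ?thesis by (simp add: sum.delta)
    qed
    finally show "v \<in> gen_ideal N {I. I \<subseteq> {1..N} \<and> card I = k} f"
      unfolding gen_ideal_def using gM v by (intro CollectI exI[of _ g] conjI) auto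
  qed
  have JM: "gen_ideal N {I. I \<subseteq> {1..N} \<and> card I = k} f \<subseteq> Mspace N"
    unfolding gen_ideal_def using assms(3) by (auto intro!: sum_Mspace mmult_Mspace)
  obtain A where A: "h ` Sets \<subseteq> A" "A \<subseteq> gen_ideal N {I. I \<subseteq> {1..N} \<and> card I = k} f"
    "V.independent A" "gen_ideal N {I. I \<subseteq> {1..N} \<and> card I = k} f \<subseteq> V.span A"
    using V.maximal_independent_subset_extend[OF hJ indep] by blast
  have "finite A" using V.independent_span_bound[OF _ A(3), of "mmono ` Pow {1..N}"] A(2) JM Mspan[of N] by auto
  then have "card (h ` Sets) \<le> card A" using A(1) by (rule card_mono)
  also have "card A = V.dim (gen_ideal N {I. I \<subseteq> {1..N} \<and> card I = k} f)"
    using V.basis_card_eq_dim[OF A(2) A(4) A(3)] .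
  finally have "card (h ` Sets) \<le> V.dim (gen_ideal N {I. I \<subseteq> {1..N} \<and> card I = k} f)" .
  then have dJ: "card Sets \<le> V.dim (gen_ideal N {I. I \<subseteq> {1..N} \<and> card I = k} f)"
    by (simp add: card_image[OF inj])
  have cnt: "card Sets + (\<Sum>j = 0..k - 1. N choose j) = 2 ^ N"
    unfolding Sets_def by (rule count_small[OF assms(1)])
  show ?thesis unfolding quot_dim_def using dimM[of N] dJ cnt by linarith
qed

end
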